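(* Let $1<p<2<r<\infty$ with $r'<p$, where $q'=q/(q-1)$. Let $(k_n)$ be a sequence of positive integers such that for all $n\ge1$ \[1+2\sum_{i=1}^{n-1}i^{r/2}k_i^{r/2}\le k_n^{1-p/2}\big/n^{p/2}\quad\text{and}\quad\Big(\frac{n+1}{n}\Big)^{r/2}\Big(\frac{k_n}{k_{n+1}}\Big)^{(1/p-1/p')r/2}\le\frac12,\] and put $\alpha_n=\sqrt n\,k_n^{(1/p'-1/p)/2}$. Then for all $l,j\in\mathbb N$ with \[2\sum_{i=1}^{l-1}i^{r/2}k_i^{r/2}\le j\le k_l^{1-p/2}\big/l^{p/2},\] and all real $x_1,\dots,x_l$ with $0\le x_i\le k_i$ for $1\le i<l$ and $0\le x_l\le j-\sum_{i=1}^{l-1}x_i$, we have \[0\le\sum_{i=1}^l\alpha_i^r x_i^{r/p}\le\frac j2+2.\] *)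

theory Defs
  imports Complex_Main
begin

definition conj_exp :: "real \<Rightarrow> real" where
  "conj_exp q = q / (q - 1)"

end

theory Submission
  imports Defs
begin

lemma term_eq:
  fixes p r y z :: real
  assumes "1 < p" "0 < y" "0 < z"
  shows "(sqrt y * z powr ((1/conj_exp p - 1/p)/2)) powr r
       = y powr (r/2) * z powr (r/2 - r/p)"
proof -
  have e: "(1/conj_exp p - 1/p)/2 * r = r/2 - r/p" "(1/conj_exp p - 1/p) * r / 2 = r/2 - r/p"
    using assms(1) by (simp_all add: conj_exp_def field_simps)
  have "sqrt y = y powr (1/2)" using assms by (simp add: powr_half_sqrt)
  then have "(sqrt y * z powr ((1/conj_exp p - 1/p)/2)) powr r
      = (y powr (1/2)) powr r * (z powr ((1/conj_exp p - 1/p)/2)) powr r"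
    using assms by (simp add: powr_mult)
  also have "\<dots> = y powr (r/2) * z powr (r/2 - r/p)"
    by (simp add: powr_powr e)
  finally show ?thesis .
qed

theorem lemma7:
  fixes p r :: real and k :: "nat \<Rightarrow> nat" and l j :: nat and x :: "nat \<Rightarrow> real"
  assumes hp: "1 < p" "p < 2" and hr: "2 < r" and hrp: "conj_exp r < p"
    and kpos: "\<And>n. n \<ge> 1 \<Longrightarrow> k n > 0"
    and k1: "\<And>n. n \<ge> 1 \<Longrightarrow>
       1 + 2 * (\<Sum>i\<in>{1..<n}. real i powr (r/2) * real (k i) powr (r/2))
         \<le> real (k n) powr (1 - p/2) / real n powr (p/2)"
    and k2: "\<And>n. n \<ge> 1 \<Longrightarrow>
       ((real n + 1) / real n) powr (r/2)
         * (real (k n) / real (k (n+1))) powr ((1/p - 1/conj_exp p) * r / 2) \<le> 1/2"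
    and hl: "l \<ge> 1"
    and hj1: "2 * (\<Sum>i\<in>{1..<l}. real i powr (r/2) * real (k i) powr (r/2)) \<le> real j"
    and hj2: "real j \<le> real (k l) powr (1 - p/2) / real l powr (p/2)"
    and hx: "\<And>i. 1 \<le> i \<Longrightarrow> i < l \<Longrightarrow> 0 \<le> x i \<and> x i \<le> real (k i)"
    and hxl: "0 \<le> x l" "x l \<le> real j - (\<Sum>i\<in>{1..<l}. x i)"
  shows "0 \<le> (\<Sum>i\<in>{1..l}. (sqrt (real i) * real (k i) powr ((1/conj_exp p - 1/p)/2)) powr r
                 * x i powr (r/p))
       \<and> (\<Sum>i\<in>{1..l}. (sqrt (real i) * real (k i) powr ((1/conj_exp p - 1/p)/2)) powr r
                 * x i powr (r/p)) \<le> real j / 2 + 2"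
proof -
  define T where "T i = (sqrt (real i) * real (k i) powr ((1/conj_exp p - 1/p)/2)) powr r
                 * x i powr (r/p)" for i
  have Teq: "T i = real i powr (r/2) * real (k i) powr (r/2 - r/p) * x i powr (r/p)"
    if "i \<ge> 1" for i
    unfolding T_def using term_eq[of p "real i" "real (k i)" r] hp kpos[OF that] that by simp
  have rp: "r/p > 0" using hp hr by simp
  have Tle: "T i \<le> real i powr (r/2) * real (k i) powr (r/2)" if "1 \<le> i" "i < l" for i
  proof -
    have "x i powr (r/p) \<le> real (k i) powr (r/p)"
      using hx[OF that] rp by (intro powr_mono2) auto
    then have "T i \<le> real i powr (r/2) * real (k i) powr (r/2 - r/p) * real (k i) powr (r/p)"
      unfolding Teq[OF that(1)] by (intro mult_left_mono) auto
    also have "\<dots> = real i powr (r/2) * real (k i) powr (r/2)"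
      using kpos[OF that(1)] by (simp add: powr_add[symmetric] mult.assoc)
    finally show ?thesis .
  qed
  have sx: "(\<Sum>i\<in>{1..<l}. x i) \<ge> 0" using hx by (intro sum_nonneg) auto
  have xlj: "x l \<le> real j" using hxl sx by linarith
  have kl: "real (k l) > 0" using kpos[OF hl] by simp
  have ll: "real l > 0" using hl by simp
  have "x l powr (r/p) \<le> (real (k l) powr (1 - p/2) / real l powr (p/2)) powr (r/p)"
    using hxl(1) xlj hj2 rp by (intro powr_mono2) auto
  also have "\<dots> = real (k l) powr ((1 - p/2) * (r/p)) / real l powr (p/2 * (r/p))"
    using kl ll by (simp add: powr_divide powr_powr)
  also have "\<dots> = real (k l) powr (r/p - r/2) / real l powr (r/2)"
    using hp by (simp add: field_simps)
  finally have xl: "x l powr (r/p) \<le> real (k l) powr (r/p - r/2) / real l powr (r/2)" .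
  have TL: "T l \<le> 1"
  proof -
    have "T l \<le> real l powr (r/2) * real (k l) powr (r/2 - r/p) *
           (real (k l) powr (r/p - r/2) / real l powr (r/2))"
      unfolding Teq[OF hl] using xl by (intro mult_left_mono) auto
    also have "\<dots> = real (k l) powr (r/2 - r/p) * real (k l) powr (r/p - r/2)"
      using ll by simp
    also have "\<dots> = 1" using kl by (simp add: powr_add[symmetric])
    finally show ?thesis .
  qed
  have T0: "T i \<ge> 0" for i unfolding T_def by simp
  have split: "{1..l} = insert l {1..<l}" using hl by auto
  have sumT: "(\<Sum>i\<in>{1..l}. T i) = T l + (\<Sum>i\<in>{1..<l}. T i)"
    unfolding split by simp
  have "(\<Sum>i\<in>{1..<l}. T i) \<le> (\<Sum>i\<in>{1..<l}. real i powr (r/2) * real (k i) powr (r/2))"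
    by (intro sum_mono Tle) auto
  then have "(\<Sum>i\<in>{1..l}. T i) \<le> real j / 2 + 2" using sumT TL hj1 by linarith
  moreover have "(\<Sum>i\<in>{1..l}. T i) \<ge> 0" by (intro sum_nonneg T0)
  ultimately show ?thesis unfolding T_def by simp
qed

end
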